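(* For every integer $m\geq 1$, \[ \begin{pmatrix}\delta^s_2\big((s_1^2+s_2^2)^m\big)\\ -\delta^s_1\big((s_1^2+s_2^2)^m\big)\end{pmatrix}\in \mathrm{Vect}(\mathbb{C}^s_{\langle 2\rangle}\,|\,\tau), \] where $s_1,s_2$, $\tau$, $\delta^s$ and $\mathrm{Vect}(\mathbb{C}^s_{\langle 2\rangle}|\tau)$ are as in the context with $n=2$.
   Context: Let $n\geq 1$ (here $n=2$), let $\{e_1,\dots,e_n\}$ be an orthonormal basis of $\mathbb{C}^n$ and $\{f_1,\dots,f_n\}$ the standard basis of $\mathbb{C}^n$. The full Fock space is $\mathcal{F}(\mathbb{C}^n)=\mathbb{C}1\oplus\bigoplus_{k\geq1}(\mathbb{C}^n)^{\otimes k}$ with vacuum vector $1$. For a word $w=i_1\cdots i_k$ over the alphabet $[n]=\{1,\dots,n\}$ put $e_w=e_{i_1}\otimes\cdots\otimes e_{i_k}$ (and $e_\epsilon=1$ for the empty word). Let $l_j$ be the left creation operator $l_je_w=e_{jw}$, and $s_j=l_j+l_j^*$ ($j=1,\dots,n$); these form a free semicircular system with respect to the vacuum state $\tau(x)=\langle x1,1\rangle$. Let $\mathbb{C}^s_{\langle n\rangle}$ be the unital algebra generated by $s_1,\dots,s_n$. The cyclic gradient $\delta^s=(\delta^s_1,\dots,\delta^s_n):\mathbb{C}^s_{\langle n\rangle}\to(\mathbb{C}^s_{\langle n\rangle})^n$ is the linear map with $\delta^s(s_{i_1}\cdots s_{i_p})=\sum_{j=1}^p s_{i_{j+1}}\cdots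 s_{i_p}s_{i_1}\cdots s_{i_{j-1}}\otimes f_{i_j}$ (identifying $(\mathbb{C}^s_{\langle n\rangle})^n\cong \mathbb{C}^s_{\langle n\rangle}\otimes\mathbb{C}^n$), i.e. $\delta^s_j(s_{i_1}\cdots s_{i_p})=\sum_{m:\,i_m=j}s_{i_{m+1}}\cdots s_{i_p}s_{i_1}\cdots s_{i_{m-1}}$. The free divergence-free vector field is $\mathrm{Vect}(\mathbb{C}^s_{\langle n\rangle}|\tau)=\{(p_1,\dots,p_n)\in(\mathbb{C}^s_{\langle n\rangle})^n : \sum_{j=1}^n\tau(p_j\,\delta^s_j[r])=0 \text{ for all } r\in\mathbb{C}^s_{\langle n\rangle}\}$. *)

theory Defs
  imports Complex_Main
begin

text \<open>Full Fock space over C^n with orthonormal basis e_i indexed by natural numbers: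
  a vector is a function from words (nat list) to complex coefficients; e_w is the
  indicator of the word w, the vacuum is the indicator of the empty word.\<close>

type_synonym fock = "nat list \<Rightarrow> complex"

definition vac :: fock where
  "vac = (\<lambda>w. if w = [] then 1 else 0)"

text \<open>left creation l_j e_w = e_{jw}\<close>
definition lcr :: "nat \<Rightarrow> fock \<Rightarrow> fock" where
  "lcr j v = (\<lambda>w. case w of [] \<Rightarrow> 0 | i # u \<Rightarrow> (if i = j then v u else 0))"

definition lann :: "nat \<Rightarrow> fock \<Rightarrow> fock" where
  "lann j v = (\<lambda>w. v (j # w))"

definition semi :: "nat \<Rightarrow> fock \<Rightarrow> fock" where
  "semi j v = (\<lambda>w. lcr j v w + lann j v w)"

definition mono_op :: "nat list \<Rightarrow> fock \<Rightarrow> fock" where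
  "mono_op w = foldr (\<lambda>i f. semi i \<circ> f) w id"

text \<open>vacuum state tau(x) = <x 1, 1> on a monomial\<close>
definition tau_word :: "nat list \<Rightarrow> complex" where
  "tau_word w = mono_op w vac []"

text \<open>Elements of C^s_<n> as finite linear combinations of monomials in s_1..s_n
  (list of coefficient/word pairs).\<close>
type_synonym spoly = "(complex \<times> nat list) list"

definition tauP :: "spoly \<Rightarrow> complex" where
  "tauP p = (\<Sum>(c, w)\<leftarrow>p. c * tau_word w)"

definition mulP :: "spoly \<Rightarrow> spoly \<Rightarrow> spoly" where
  "mulP p q = [(c * d, u @ v). (c, u) \<leftarrow> p, (d, v) \<leftarrow> q]"

definition addP :: "spoly \<Rightarrow> spoly \<Rightarrow> spoly" where
  "addP p q = p @ q"

definition negP :: "spoly \<Rightarrow> spoly" where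
  "negP p = map (\<lambda>(c, w). (- c, w)) p"

definition oneP :: spoly where
  "oneP = [(1, [])]"

definition genP :: "nat \<Rightarrow> spoly" where
  "genP j = [(1, [j])]"

fun powP :: "spoly \<Rightarrow> nat \<Rightarrow> spoly" where
  "powP p 0 = oneP"
| "powP p (Suc k) = mulP p (powP p k)"

text \<open>cyclic derivative delta_j on the monomial s_{i_1}...s_{i_p}:
  sum over positions m with i_m = j of s_{i_{m+1}}...s_{i_p} s_{i_1}...s_{i_{m-1}}\<close>
definition cgrad_word :: "nat \<Rightarrow> nat list \<Rightarrow> spoly" where
  "cgrad_word j w = [(1, drop (Suc k) w @ take k w). k \<leftarrow> [0..<length w], w ! k = j]"

definition cgradP :: "nat \<Rightarrow> spoly \<Rightarrow> spoly" where
  "cgradP j p = concat (map (\<lambda>(c, w). map (\<lambda>(d, v). (c * d, v)) (cgrad_word j w)) p)"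

definition inAlg :: "nat \<Rightarrow> spoly \<Rightarrow> bool" where
  "inAlg n p = (\<forall>(c, w) \<in> set p. set w \<subseteq> {1..n})"

text \<open>Vect(C^s_<n> | tau), vector fields given as functions on {1..n}\<close>
definition inVect :: "nat \<Rightarrow> (nat \<Rightarrow> spoly) \<Rightarrow> bool" where
  "inVect n P = ((\<forall>j\<in>{1..n}. inAlg n (P j)) \<and>
     (\<forall>r. inAlg n r \<longrightarrow> (\<Sum>j=1..n. tauP (mulP (P j) (cgradP j r))) = 0))"

end

theory Submission
  imports Defs
begin


definition cf :: "nat list \<Rightarrow> nat list \<Rightarrow> complex" where
  "cf w t = mono_op w vac t"

lemma cf_Nil: "cf [] t = (if t = [] then 1 else 0)"
  by (simp add: cf_def mono_op_def vac_def)

lemma cf_Cons: "cf (i#w) t = (case t of [] \<Rightarrow> 0 | a#u \<Rightarrow> (if a = i then cf w u else 0)) + cf w (i#t)"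
  by (cases t) (simp_all add: cf_def mono_op_def semi_def lcr_def lann_def)

lemma take_Suc_Cons': "take (Suc k) (i # w) = i # take k w" by simp

lemma cf_split_aux:
  "\<forall>y. cf w (y @ j # z) = (\<Sum>k<length w. if w!k = j then cf (take k w) y * cf (drop (Suc k) w) z else 0)"
proof (induction w)
  case Nil
  then show ?case by (simp add: cf_Nil)
next
  case (Cons i w)
  show ?case
  proof
    fix y :: "nat list"
    have shift: "(\<Sum>k<length (i#w). if (i#w)!k = j then cf (take k (i#w)) y * cf (drop (Suc k) (i#w)) z else 0)
      = (if i = j then cf [] y * cf w z else 0) + (\<Sum>k<length w. if w!k = j then cf (i # take k w) y * cf (drop (Suc k) w) z else 0)"
      by (simp add: sum.lessThan_Suc_shift del: sum.lessThan_Suc cong: if_cong)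
    show "cf (i#w) (y @ j # z) = (\<Sum>k<length (i#w). if (i#w)!k = j then cf (take k (i#w)) y * cf (drop (Suc k) (i#w)) z else 0)"
    proof (cases y)
      case Nil
      have "cf (i # w) (y @ j # z) = (if i = j then cf w z else 0) + cf w (i # j # z)"
        using Nil by (simp add: cf_Cons)
      also have "cf w (i # j # z) = (\<Sum>k<length w. if w!k = j then cf (take k w) [i] * cf (drop (Suc k) w) z else 0)"
        using Cons.IH by (metis append_Cons append_Nil)
      finally show ?thesis unfolding shift using Nil
        by (simp add: cf_Cons cf_Nil cong: if_cong)
    next
      case (Cons a u)
      have "cf (i # w) (y @ j # z) = (if a = i then cf w (u @ j # z) else 0) + cf w ((i # a # u) @ j # z)"
        using Cons by (simp add: cf_Cons)
      also have "\<dots> = (if a = i then (\<Sum>k<length w. if w!k = j then cf (take k w) u * cf (drop (Suc k) w) z else 0) else 0)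
          + (\<Sum>k<length w. if w!k = j then cf (take k w) (i#a#u) * cf (drop (Suc k) w) z else 0)"
        using Cons.IH[rule_format, of u] Cons.IH[rule_format, of "i#a#u"] by simp
      finally show ?thesis unfolding shift using Cons
        by (cases "a = i") (auto simp: cf_Cons cf_Nil sum.distrib[symmetric] distrib_right intro!: sum.cong)
    qed
  qed
qed

lemma cf_split:
  "cf w (y @ j # z) = (\<Sum>k<length w. if w!k = j then cf (take k w) y * cf (drop (Suc k) w) z else 0)"
  using cf_split_aux by blast

lemma tau_cf: "tau_word w = cf w []"
  by (simp add: tau_word_def cf_def)

lemma tau_Nil: "tau_word [] = 1"
  by (simp add: tau_cf cf_Nil)

lemma SD: "tau_word (j # z) =
  (\<Sum>k<length z. if z!k = j then tau_word (take k z) * tau_word (drop (Suc k) z) else 0)"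
proof -
  have "tau_word (j # z) = cf z ([] @ j # [])" by (simp add: tau_cf cf_Cons)
  then show ?thesis using cf_split[of z "[]" j "[]"] by (simp add: tau_cf cong: if_cong)
qed

lemma tau_odd: "odd (length w) \<Longrightarrow> tau_word w = 0"
proof (induction "length w" arbitrary: w rule: less_induct)
  case less
  show ?case
  proof (cases w)
    case Nil
    then show ?thesis using less.prems by simp
  next
    case (Cons j z)
    have "\<And>k. k < length z \<Longrightarrow> tau_word (take k z) * tau_word (drop (Suc k) z) = 0"
    proof -
      fix k assume k: "k < length z"
      have ev: "even (length z)" using less.prems Cons by simp
      show "tau_word (take k z) * tau_word (drop (Suc k) z) = 0"
      proof (cases "odd k")
        case True
        then have "tau_word (take k z) = 0" using less.hyps[of "take k z"] k Cons by simp
        then show ?thesis by simp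
      next
        case False
        then have "odd (length (drop (Suc k) z))" using ev k by simp
        then have "tau_word (drop (Suc k) z) = 0" using less.hyps[of "drop (Suc k) z"] k Cons by simp
        then show ?thesis by simp
      qed
    qed
    then show ?thesis unfolding Cons SD by (intro sum.neutral) auto
  qed
qed

lemma triangle:
  "(\<Sum>k<n. \<Sum>l<n - Suc k. g k (Suc k + l)) = (\<Sum>b<n. \<Sum>a<b. g a b)"
proof (induction n)
  case 0
  then show ?case by simp
next
  case (Suc n)
  have "(\<Sum>k<Suc n. \<Sum>l<Suc n - Suc k. g k (Suc k + l))
      = (\<Sum>k<n. \<Sum>l<Suc n - Suc k. g k (Suc k + l))" by simp
  also have "\<dots> = (\<Sum>k<n. (\<Sum>l<n - Suc k. g k (Suc k + l)) + g k n)"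
  proof (rule sum.cong)
    fix k assume "k \<in> {..<n}"
    then have k: "k < n" by simp
    then have e: "Suc n - Suc k = Suc (n - Suc k)" by simp
    have "Suc k + (n - Suc k) = n" using k by simp
    then show "(\<Sum>l<Suc n - Suc k. g k (Suc k + l)) = (\<Sum>l<n - Suc k. g k (Suc k + l)) + g k n"
      unfolding e by simp
  qed simp
  also have "\<dots> = (\<Sum>b<Suc n. \<Sum>a<b. g a b)"
    using Suc.IH by (simp add: sum.distrib)
  finally show ?case .
qed

lemma SD_right: "tau_word (w @ [j]) =
  (\<Sum>k<length w. if w!k = j then tau_word (take k w) * tau_word (drop (Suc k) w) else 0)"
proof (induction "length w" arbitrary: w rule: less_induct)
  case less
  show ?case
  proof (cases w)
    case Nil
    then show ?thesis by (simp add: SD)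
  next
    case (Cons i v)
    let ?n = "length v"
    define g where "g a b = (if v!a = i \<and> v!b = j then tau_word (take a v) * tau_word (drop (Suc a) (take b v))
        * tau_word (drop (Suc b) v) else 0)" for a b
    have L: "tau_word (w @ [j]) = (\<Sum>k<?n. if v!k = i then tau_word (take k v) * tau_word (drop (Suc k) v @ [j]) else 0)
         + (if j = i then tau_word v else 0)"
      unfolding Cons by (simp add: SD nth_append tau_Nil cong: if_cong)
    have L2: "(\<Sum>k<?n. if v!k = i then tau_word (take k v) * tau_word (drop (Suc k) v @ [j]) else 0)
        = (\<Sum>k<?n. \<Sum>l<?n - Suc k. g k (Suc k + l))"
    proof (rule sum.cong)
      fix k assume "k \<in> {..<?n}"
      then have k: "k < ?n" by simp
      have IH: "tau_word (drop (Suc k) v @ [j]) = (\<Sum>l<?n - Suc k. if drop (Suc k) v ! l = j then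
          tau_word (take l (drop (Suc k) v)) * tau_word (drop (Suc l) (drop (Suc k) v)) else 0)"
        using less.hyps[of "drop (Suc k) v"] Cons by simp
      show "(if v!k = i then tau_word (take k v) * tau_word (drop (Suc k) v @ [j]) else 0) = (\<Sum>l<?n - Suc k. g k (Suc k + l))"
        unfolding IH g_def using k
        by (auto simp: sum_distrib_left take_drop drop_drop add.commute intro!: sum.cong)
    qed simp
    have R: "(\<Sum>k<length w. if w!k = j then tau_word (take k w) * tau_word (drop (Suc k) w) else 0)
       = (if i = j then tau_word v else 0) + (\<Sum>k<?n. if v!k = j then tau_word (i # take k v) * tau_word (drop (Suc k) v) else 0)"
      unfolding Cons by (simp add: sum.lessThan_Suc_shift tau_Nil del: sum.lessThan_Suc cong: if_cong)
    have R2: "(\<Sum>k<?n. if v!k = j then tau_word (i # take k v) * tau_word (drop (Suc k) v) else 0)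
        = (\<Sum>b<?n. \<Sum>a<b. g a b)"
    proof (rule sum.cong)
      fix b assume "b \<in> {..<?n}"
      then have b: "b < ?n" by simp
      show "(if v!b = j then tau_word (i # take b v) * tau_word (drop (Suc b) v) else 0) = (\<Sum>a<b. g a b)"
        unfolding SD g_def using b
        by (auto simp: sum_distrib_right min_def intro!: sum.cong)
    qed simp
    show ?thesis using L L2 R R2 triangle[where n="?n" and g=g] by simp
  qed
qed

lemma tau_rot1: "tau_word (j # w) = tau_word (w @ [j])"
  by (simp add: SD SD_right)

lemma tau_comm: "tau_word (u @ v) = tau_word (v @ u)"
proof (induction u arbitrary: v)
  case Nil
  then show ?case by simp
next
  case (Cons a u)
  have "tau_word ((a # u) @ v) = tau_word ((u @ v) @ [a])" by (simp add: tau_rot1)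
  also have "\<dots> = tau_word (u @ (v @ [a]))" by simp
  also have "\<dots> = tau_word ((v @ [a]) @ u)" by (rule Cons.IH)
  finally show ?case by simp
qed



definition blk :: "nat list \<Rightarrow> nat list" where
  "blk cs = concat (map (\<lambda>c. [c,c]) cs)"

lemma blk_Nil[simp]: "blk [] = []" by (simp add: blk_def)
lemma blk_Cons[simp]: "blk (c # cs) = c # c # blk cs" by (simp add: blk_def)
lemma blk_append[simp]: "blk (a @ b) = blk a @ blk b" by (simp add: blk_def)
lemma length_blk[simp]: "length (blk cs) = 2 * length cs" by (induction cs) auto
lemma set_blk[simp]: "set (blk cs) = set cs" by (induction cs) auto

lemma blk_nth: "i < length cs \<Longrightarrow> blk cs ! (2*i) = cs ! i \<and> blk cs ! (Suc (2*i)) = cs ! i"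
proof (induction cs arbitrary: i)
  case Nil then show ?case by simp
next
  case (Cons c cs) then show ?case by (cases i) auto
qed

lemma take_blk: "take (2*i) (blk cs) = blk (take i cs)"
proof (induction cs arbitrary: i)
  case Nil then show ?case by simp
next
  case (Cons c cs) then show ?case by (cases i) auto
qed

lemma drop_blk: "drop (2*i) (blk cs) = blk (drop i cs)"
proof (induction cs arbitrary: i)
  case Nil then show ?case by simp
next
  case (Cons c cs) then show ?case by (cases i) auto
qed

lemma drop_blk_odd: "i < length cs \<Longrightarrow> drop (Suc (2*i)) (blk cs) = cs!i # blk (drop (Suc i) cs)"
proof (induction cs arbitrary: i)
  case Nil then show ?case by simp
next
  case (Cons c cs) then show ?case by (cases i) auto
qed

lemma take_blk_odd: "i < length cs \<Longrightarrow> take (Suc (2*i)) (blk cs) = blk (take i cs) @ [cs!i]"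
proof (induction cs arbitrary: i)
  case Nil then show ?case by simp
next
  case (Cons c cs) then show ?case by (cases i) auto
qed

lemma drop_blk_odd2: "drop (Suc (Suc (2*i))) (blk cs) = blk (drop (Suc i) cs)"
  using drop_blk[of "Suc i" cs] by simp

lemma sum_even_odd: "(\<Sum>p<2*n. f p) = (\<Sum>i<n. f (2*i) + f (Suc (2*i)))"
proof (induction n)
  case 0 then show ?case by simp
next
  case (Suc n)
  have "2 * Suc n = Suc (Suc (2*n))" by simp
  then show ?case using Suc by (simp add: add.assoc)
qed

definition W :: "nat \<Rightarrow> nat list set" where
  "W n = {cs. length cs = n \<and> set cs \<subseteq> {1,2}}"

lemma finite_W[simp]: "finite (W n)"
proof -
  have "W n = {cs. set cs \<subseteq> {1,2} \<and> length cs = n}" by (auto simp: W_def)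
  then show ?thesis using finite_lists_length_eq[of "{1,2::nat}" n] by simp
qed

lemma PB:
  fixes f g :: "nat list \<Rightarrow> complex"
  assumes x: "x \<in> {1,2}" and i: "i < n"
  shows "(\<Sum>ds\<in>W n. if ds!i = x then f (take i ds) * g (drop (Suc i) ds) else 0)
       = (\<Sum>e\<in>W i. f e) * (\<Sum>e\<in>W (n - Suc i). g e)"
proof -
  have "(\<Sum>ds\<in>W n. if ds!i = x then f (take i ds) * g (drop (Suc i) ds) else 0)
      = (\<Sum>ds\<in>{ds\<in>W n. ds!i = x}. f (take i ds) * g (drop (Suc i) ds))"
    by (simp add: sum.inter_filter)
  also have "\<dots> = (\<Sum>p\<in>W i \<times> W (n - Suc i). f (fst p) * g (snd p))"
  proof (rule sum.reindex_bij_witness[where i="\<lambda>p. fst p @ x # snd p" and j="\<lambda>ds. (take i ds, drop (Suc i) ds)"])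
    fix ds assume "ds \<in> {ds\<in>W n. ds!i = x}"
    then have ds: "length ds = n" "set ds \<subseteq> {1,2}" "ds!i = x" by (auto simp: W_def)
    show "fst (take i ds, drop (Suc i) ds) @ x # snd (take i ds, drop (Suc i) ds) = ds"
      using ds i id_take_nth_drop[of i ds] by simp
    show "(take i ds, drop (Suc i) ds) \<in> W i \<times> W (n - Suc i)"
      using ds i set_take_subset[of i ds] set_drop_subset[of "Suc i" ds] by (auto simp: W_def)
    show "f (fst (take i ds, drop (Suc i) ds)) * g (snd (take i ds, drop (Suc i) ds)) = f (take i ds) * g (drop (Suc i) ds)"
      by simp
  next
    fix p assume "p \<in> W i \<times> W (n - Suc i)"
    then have p: "length (fst p) = i" "length (snd p) = n - Suc i" "set (fst p) \<subseteq> {1,2}" "set (snd p) \<subseteq> {1,2}"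
      by (auto simp: W_def)
    show "(take i (fst p @ x # snd p), drop (Suc i) (fst p @ x # snd p)) = p"
      using p by simp
    show "fst p @ x # snd p \<in> {ds \<in> W n. ds ! i = x}"
      using p x i by (auto simp: W_def nth_append)
  qed
  also have "\<dots> = (\<Sum>e\<in>W i. f e) * (\<Sum>e\<in>W (n - Suc i). g e)"
    unfolding sum_product sum.cartesian_product by (rule sum.cong) auto
  finally show ?thesis .
qed

lemma PR:
  assumes x: "x \<in> {1,2}" and i: "i \<le> n"
  shows "(\<Sum>cs\<in>W (Suc n). if cs!i = x then h (drop (Suc i) cs @ take i cs) else 0) = (\<Sum>ds\<in>W n. h ds)"
proof -
  have "(\<Sum>cs\<in>W (Suc n). if cs!i = x then h (drop (Suc i) cs @ take i cs) else 0)
      = (\<Sum>cs\<in>{cs\<in>W (Suc n). cs!i = x}. h (drop (Suc i) cs @ take i cs))"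
    by (simp add: sum.inter_filter)
  also have "\<dots> = (\<Sum>ds\<in>W n. h ds)"
  proof (rule sum.reindex_bij_witness[where i="\<lambda>ds. drop (n - i) ds @ x # take (n - i) ds" and j="\<lambda>cs. drop (Suc i) cs @ take i cs"])
    fix cs assume "cs \<in> {cs\<in>W (Suc n). cs!i = x}"
    then have cs: "length cs = Suc n" "set cs \<subseteq> {1,2}" "cs!i = x" by (auto simp: W_def)
    have l: "length (drop (Suc i) cs) = n - i" using cs by simp
    show "drop (n - i) (drop (Suc i) cs @ take i cs) @ x # take (n - i) (drop (Suc i) cs @ take i cs) = cs"
      using l cs i id_take_nth_drop[of i cs] by simp
    show "drop (Suc i) cs @ take i cs \<in> W n"
      using cs i set_take_subset[of i cs] set_drop_subset[of "Suc i" cs] by (auto simp: W_def)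
  next
    fix ds assume "ds \<in> W n"
    then have ds: "length ds = n" "set ds \<subseteq> {1,2}" by (auto simp: W_def)
    have l: "length (drop (n - i) ds) = i" using ds i by simp
    show "drop (Suc i) (drop (n - i) ds @ x # take (n - i) ds) @ take i (drop (n - i) ds @ x # take (n - i) ds) = ds"
      using l by simp
    show "drop (n - i) ds @ x # take (n - i) ds \<in> {cs \<in> W (Suc n). cs ! i = x}"
      using ds x i l set_take_subset[of "n-i" ds] set_drop_subset[of "n-i" ds]
      by (auto simp: W_def nth_append)
  qed simp
  finally show ?thesis .
qed



lemma sum_split_add: fixes a b :: nat shows "(\<Sum>p<a + b. f p) = (\<Sum>p<a. f p) + (\<Sum>q<b. f (a + q))"
  by (induction b) (simp_all add: add.assoc)

definition AA :: "nat \<Rightarrow> nat \<Rightarrow> nat list \<Rightarrow> complex" where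
  "AA n x y = (\<Sum>ds\<in>W n. tau_word (x # blk ds @ y))"
definition BB :: "nat \<Rightarrow> nat \<Rightarrow> nat list \<Rightarrow> complex" where
  "BB n x y = (\<Sum>ds\<in>W n. tau_word (blk ds @ x # y))"
definition CC :: "nat \<Rightarrow> complex" where
  "CC i = (\<Sum>ds\<in>W i. tau_word (blk ds))"
definition TQ :: "nat \<Rightarrow> nat list \<Rightarrow> complex" where
  "TQ n u = (\<Sum>ds\<in>W n. tau_word (blk ds @ u))"
definition al :: "nat \<Rightarrow> nat \<Rightarrow> nat list \<Rightarrow> complex" where
  "al n x y = (\<Sum>q<length y. if y!q = x then TQ n (take q y) * tau_word (drop (Suc q) y) else 0)"
definition be :: "nat \<Rightarrow> nat \<Rightarrow> nat list \<Rightarrow> complex" where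
  "be n x y = (\<Sum>q<length y. if y!q = x then tau_word (take q y) * TQ n (drop (Suc q) y) else 0)"

lemma odd_blk_tau: "tau_word (blk t @ [c]) = 0" "tau_word (c # blk t) = 0"
  by (auto intro!: tau_odd)

lemma RA_ds:
  assumes "length ds = n"
  shows "tau_word (x # blk ds @ y) =
    (\<Sum>i<n. if ds!i = x then tau_word (blk (take i ds)) * tau_word (x # blk (drop (Suc i) ds) @ y) else 0)
    + (\<Sum>q<length y. if y!q = x then tau_word (blk ds @ take q y) * tau_word (drop (Suc q) y) else 0)"
proof -
  have "tau_word (x # blk ds @ y) = (\<Sum>p<2*n + length y. if (blk ds @ y)!p = x then
      tau_word (take p (blk ds @ y)) * tau_word (drop (Suc p) (blk ds @ y)) else 0)"
    using assms by (simp add: SD)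
  also have "\<dots> = (\<Sum>p<2*n. if blk ds!p = x then tau_word (take p (blk ds)) * tau_word (drop (Suc p) (blk ds) @ y) else 0)
      + (\<Sum>q<length y. if y!q = x then tau_word (blk ds @ take q y) * tau_word (drop (Suc q) y) else 0)"
    unfolding sum_split_add using assms by (simp add: nth_append cong: if_cong)
  also have "(\<Sum>p<2*n. if blk ds!p = x then tau_word (take p (blk ds)) * tau_word (drop (Suc p) (blk ds) @ y) else 0)
      = (\<Sum>i<n. if ds!i = x then tau_word (blk (take i ds)) * tau_word (x # blk (drop (Suc i) ds) @ y) else 0)"
    unfolding sum_even_odd
  proof (rule sum.cong)
    fix i assume "i \<in> {..<n}"
    then have i: "i < length ds" using assms by simp
    show "(if blk ds ! (2 * i) = x then tau_word (take (2 * i) (blk ds)) * tau_word (drop (Suc (2 * i)) (blk ds) @ y) else 0) +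
        (if blk ds ! Suc (2 * i) = x then tau_word (take (Suc (2 * i)) (blk ds)) * tau_word (drop (Suc (Suc (2 * i))) (blk ds) @ y) else 0) =
        (if ds ! i = x then tau_word (blk (take i ds)) * tau_word (x # blk (drop (Suc i) ds) @ y) else 0)"
      using i by (simp add: blk_nth take_blk drop_blk_odd take_blk_odd odd_blk_tau)
  qed simp
  finally show ?thesis .
qed

lemma RA:
  assumes x: "x \<in> {1,2}"
  shows "AA n x y = (\<Sum>i<n. CC i * AA (n - Suc i) x y) + al n x y"
proof -
  have "AA n x y = (\<Sum>ds\<in>W n. (\<Sum>i<n. if ds!i = x then tau_word (blk (take i ds)) * tau_word (x # blk (drop (Suc i) ds) @ y) else 0)
    + (\<Sum>q<length y. if y!q = x then tau_word (blk ds @ take q y) * tau_word (drop (Suc q) y) else 0))"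
    unfolding AA_def by (rule sum.cong) (auto simp: W_def RA_ds)
  also have "\<dots> = (\<Sum>i<n. \<Sum>ds\<in>W n. if ds!i = x then tau_word (blk (take i ds)) * tau_word (x # blk (drop (Suc i) ds) @ y) else 0)
    + (\<Sum>q<length y. \<Sum>ds\<in>W n. if y!q = x then tau_word (blk ds @ take q y) * tau_word (drop (Suc q) y) else 0)"
    by (simp add: sum.distrib sum.swap[of _ "W n"])
  also have "(\<Sum>i<n. \<Sum>ds\<in>W n. if ds!i = x then tau_word (blk (take i ds)) * tau_word (x # blk (drop (Suc i) ds) @ y) else 0)
     = (\<Sum>i<n. CC i * AA (n - Suc i) x y)"
  proof (rule sum.cong)
    fix i assume "i \<in> {..<n}"
    then have i: "i < n" by simp
    show "(\<Sum>ds\<in>W n. if ds!i = x then tau_word (blk (take i ds)) * tau_word (x # blk (drop (Suc i) ds) @ y) else 0)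
       = CC i * AA (n - Suc i) x y"
      unfolding CC_def AA_def
      by (rule PB[OF x i, where f="\<lambda>e. tau_word (blk e)" and g="\<lambda>e. tau_word (x # blk e @ y)"])
  qed simp
  also have "(\<Sum>q<length y. \<Sum>ds\<in>W n. if y!q = x then tau_word (blk ds @ take q y) * tau_word (drop (Suc q) y) else 0)
     = al n x y"
    unfolding al_def TQ_def by (rule sum.cong) (auto simp: sum_distrib_right)
  finally show ?thesis .
qed

lemma RB_ds:
  assumes "length ds = n"
  shows "tau_word (blk ds @ x # y) =
    (\<Sum>i<n. if ds!i = x then tau_word (blk (take i ds) @ x # y) * tau_word (blk (drop (Suc i) ds)) else 0)
    + (\<Sum>q<length y. if y!q = x then tau_word (take q y) * tau_word (blk ds @ drop (Suc q) y) else 0)"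
proof -
  have "tau_word (blk ds @ x # y) = tau_word (x # (y @ blk ds))"
    using tau_comm[of "blk ds" "x # y"] by simp
  also have "\<dots> = (\<Sum>p<length y + 2*n. if (y @ blk ds)!p = x then
      tau_word (take p (y @ blk ds)) * tau_word (drop (Suc p) (y @ blk ds)) else 0)"
    using assms by (simp add: SD)
  also have "\<dots> = (\<Sum>q<length y. if y!q = x then tau_word (take q y) * tau_word (drop (Suc q) y @ blk ds) else 0)
      + (\<Sum>p<2*n. if blk ds!p = x then tau_word (y @ take p (blk ds)) * tau_word (drop (Suc p) (blk ds)) else 0)"
    unfolding sum_split_add using assms by (simp add: nth_append Suc_diff_le cong: if_cong)
  also have "(\<Sum>q<length y. if y!q = x then tau_word (take q y) * tau_word (drop (Suc q) y @ blk ds) else 0)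
     = (\<Sum>q<length y. if y!q = x then tau_word (take q y) * tau_word (blk ds @ drop (Suc q) y) else 0)"
    by (simp add: tau_comm[of _ "blk ds"] cong: if_cong)
  also have "(\<Sum>p<2*n. if blk ds!p = x then tau_word (y @ take p (blk ds)) * tau_word (drop (Suc p) (blk ds)) else 0)
      = (\<Sum>i<n. if ds!i = x then tau_word (blk (take i ds) @ x # y) * tau_word (blk (drop (Suc i) ds)) else 0)"
    unfolding sum_even_odd
  proof (rule sum.cong)
    fix i assume "i \<in> {..<n}"
    then have i: "i < length ds" using assms by simp
    have c: "tau_word (y @ blk (take i ds) @ [x]) = tau_word (blk (take i ds) @ x # y)"
      using tau_comm[of "y @ blk (take i ds)" "[x]"] tau_comm[of "x # y" "blk (take i ds)"] by simp
    show "(if blk ds ! (2 * i) = x then tau_word (y @ take (2 * i) (blk ds)) * tau_word (drop (Suc (2 * i)) (blk ds)) else 0) +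
        (if blk ds ! Suc (2 * i) = x then tau_word (y @ take (Suc (2 * i)) (blk ds)) * tau_word (drop (Suc (Suc (2 * i))) (blk ds)) else 0) =
        (if ds ! i = x then tau_word (blk (take i ds) @ x # y) * tau_word (blk (drop (Suc i) ds)) else 0)"
      using i c by (simp add: blk_nth take_blk drop_blk_odd take_blk_odd odd_blk_tau drop_blk_odd2)
  qed simp
  finally show ?thesis by simp
qed

lemma RB:
  assumes x: "x \<in> {1,2}"
  shows "BB n x y = (\<Sum>i<n. CC i * BB (n - Suc i) x y) + be n x y"
proof -
  have "BB n x y = (\<Sum>ds\<in>W n. (\<Sum>i<n. if ds!i = x then tau_word (blk (take i ds) @ x # y) * tau_word (blk (drop (Suc i) ds)) else 0)
    + (\<Sum>q<length y. if y!q = x then tau_word (take q y) * tau_word (blk ds @ drop (Suc q) y) else 0))"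
    unfolding BB_def by (rule sum.cong) (auto simp: W_def RB_ds)
  also have "\<dots> = (\<Sum>i<n. \<Sum>ds\<in>W n. if ds!i = x then tau_word (blk (take i ds) @ x # y) * tau_word (blk (drop (Suc i) ds)) else 0)
    + (\<Sum>q<length y. \<Sum>ds\<in>W n. if y!q = x then tau_word (take q y) * tau_word (blk ds @ drop (Suc q) y) else 0)"
    by (simp add: sum.distrib sum.swap[of _ "W n"])
  also have "(\<Sum>i<n. \<Sum>ds\<in>W n. if ds!i = x then tau_word (blk (take i ds) @ x # y) * tau_word (blk (drop (Suc i) ds)) else 0)
     = (\<Sum>i<n. BB i x y * CC (n - Suc i))"
  proof (rule sum.cong)
    fix i assume "i \<in> {..<n}"
    then have i: "i < n" by simp
    show "(\<Sum>ds\<in>W n. if ds!i = x then tau_word (blk (take i ds) @ x # y) * tau_word (blk (drop (Suc i) ds)) else 0)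
       = BB i x y * CC (n - Suc i)"
      unfolding CC_def BB_def
      by (rule PB[OF x i, where g="\<lambda>e. tau_word (blk e)" and f="\<lambda>e. tau_word (blk e @ x # y)"])
  qed simp
  also have "\<dots> = (\<Sum>i<n. CC i * BB (n - Suc i) x y)"
    using sum.nat_diff_reindex[of "\<lambda>i. BB i x y * CC (n - Suc i)" n]
    by (simp add: mult.commute)
  also have "(\<Sum>q<length y. \<Sum>ds\<in>W n. if y!q = x then tau_word (take q y) * tau_word (blk ds @ drop (Suc q) y) else 0)
     = be n x y"
    unfolding be_def TQ_def by (rule sum.cong) (auto simp: sum_distrib_left)
  finally show ?thesis .
qed



definition rot :: "nat \<Rightarrow> nat list \<Rightarrow> nat list" where
  "rot k w = drop (Suc k) w @ take k w"

definition sg :: "nat \<Rightarrow> complex" where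
  "sg a = (if a = 1 then 1 else if a = 2 then -1 else 0)"

definition flp :: "nat \<Rightarrow> nat" where
  "flp a = (if a = 1 then 2 else 1)"

definition rel :: "nat \<Rightarrow> nat \<Rightarrow> bool" where
  "rel a b = ((a = 1 \<and> b = 2) \<or> (a = 2 \<and> b = 1))"

definition Sym :: "nat \<Rightarrow> nat list \<Rightarrow> nat list \<Rightarrow> complex" where
  "Sym n u v = TQ n u * tau_word v + tau_word u * TQ n v"

lemma Sym_comm: "Sym n u v = Sym n v u"
  by (simp add: Sym_def algebra_simps)

lemma length_rot: "k < length w \<Longrightarrow> length (rot k w) = length w - 1"
  by (simp add: rot_def)

lemma nth_rot:
  assumes "k < length w" "q < length w - 1"
  shows "rot k w ! q = w ! ((Suc k + q) mod length w)"
proof (cases "Suc k + q < length w")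
  case True
  then have "q < length (drop (Suc k) w)" by simp
  then show ?thesis using True by (simp add: rot_def nth_append)
next
  case False
  then have "(Suc k + q) mod length w = Suc k + q - length w"
    using assms by (simp add: mod_if)
  moreover have "\<not> q < length (drop (Suc k) w)" using False by simp
  moreover have "q - length (drop (Suc k) w) = Suc k + q - length w" using False assms by simp
  moreover have "Suc k + q - length w < k" using assms False by simp
  ultimately show ?thesis by (simp add: rot_def nth_append)
qed

lemma modh: "(Suc (a mod L) + b) mod L = (Suc a + b) mod (L::nat)"
proof -
  have "Suc (a mod L) + b = a mod L + Suc b" by simp
  then have "(Suc (a mod L) + b) mod L = (a mod L + Suc b) mod L" by simp
  also have "\<dots> = (a + Suc b) mod L" by (rule mod_add_left_eq)
  finally show ?thesis by simp
qed

lemma sg_flp: "sg a * (if b = flp a then X else 0) = (if rel a b then sg a * X else 0)"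
  by (auto simp: sg_def flp_def rel_def)

lemma al_be: "al n x y + be n x y = (\<Sum>q<length y. if y!q = x then Sym n (take q y) (drop (Suc q) y) else 0)"
  unfolding al_def be_def Sym_def sum.distrib[symmetric] by (rule sum.cong) auto

lemma cancel:
  "(\<Sum>k<length w. sg (w!k) * (al n (flp (w!k)) (rot k w) + be n (flp (w!k)) (rot k w))) = 0"
proof -
  let ?L = "length w"
  define trm where "trm p = (if rel (w ! fst p) (rot (fst p) w ! snd p) then
      sg (w ! fst p) * Sym n (take (snd p) (rot (fst p) w)) (drop (Suc (snd p)) (rot (fst p) w)) else 0)" for p
  define \<sigma> where "\<sigma> p = ((Suc (fst p) + snd p) mod ?L, ?L - 2 - snd p)" for p
  define I where "I = {..<?L} \<times> {..<?L - 1}"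
  have sum_eq: "(\<Sum>k<length w. sg (w!k) * (al n (flp (w!k)) (rot k w) + be n (flp (w!k)) (rot k w))) = sum trm I"
  proof -
    have "(\<Sum>k<length w. sg (w!k) * (al n (flp (w!k)) (rot k w) + be n (flp (w!k)) (rot k w)))
        = (\<Sum>k<length w. \<Sum>q<?L - 1. trm (k, q))"
    proof (rule sum.cong)
      fix k assume "k \<in> {..<?L}"
      then have k: "k < ?L" by simp
      show "sg (w!k) * (al n (flp (w!k)) (rot k w) + be n (flp (w!k)) (rot k w)) = (\<Sum>q<?L - 1. trm (k, q))"
        unfolding al_be sum_distrib_left trm_def using k
        by (simp add: length_rot sg_flp trm_def cong: if_cong)
    qed simp
    also have "\<dots> = sum trm I"
      unfolding I_def by (simp add: sum.cartesian_product)
    finally show ?thesis .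
  qed
  have key: "\<And>p. p \<in> I \<Longrightarrow> \<sigma> p \<in> I \<and> \<sigma> (\<sigma> p) = p \<and> trm (\<sigma> p) = - trm p"
  proof -
    fix p assume "p \<in> I"
    then obtain k q where p: "p = (k, q)" and k: "k < ?L" and q: "q < ?L - 1"
      unfolding I_def by auto
    define k' where "k' = (Suc k + q) mod ?L"
    define q' where "q' = ?L - 2 - q"
    have L0: "0 < ?L" using k by linarith
    have k': "k' < ?L" unfolding k'_def using L0 by simp
    have q': "q' < ?L - 1" unfolding q'_def using q by simp
    have sp: "\<sigma> p = (k', q')" unfolding \<sigma>_def p k'_def q'_def by simp
    have e1: "w ! k' = rot k w ! q" unfolding k'_def using nth_rot[OF k q] by simp
    have kk: "(Suc k' + q') mod ?L = k"
    proof -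
      have "(Suc k' + q') mod ?L = (Suc (Suc k + q) + q') mod ?L"
        unfolding k'_def by (simp only: modh)
      also have "Suc (Suc k + q) + q' = k + ?L" unfolding q'_def using q by simp
      finally show ?thesis using k by simp
    qed
    have e2: "rot k' w ! q' = w ! k" using nth_rot[OF k' q'] kk by simp
    have t1: "take q' (rot k' w) = drop (Suc q) (rot k w)"
    proof (rule nth_equalityI)
      show "length (take q' (rot k' w)) = length (drop (Suc q) (rot k w))"
        using k k' q unfolding q'_def by (simp add: length_rot)
      fix t assume "t < length (take q' (rot k' w))"
      then have t: "t < q'" using k' q' by (simp add: length_rot)
      have "take q' (rot k' w) ! t = w ! ((Suc k' + t) mod ?L)"
        using t nth_rot[OF k', of t] q' by simp
      also have "\<dots> = w ! ((Suc (Suc k + q) + t) mod ?L)"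
        unfolding k'_def by (simp only: modh)
      also have "\<dots> = w ! ((Suc k + (Suc q + t)) mod ?L)" by (simp add: add.assoc)
      also have "\<dots> = drop (Suc q) (rot k w) ! t"
      proof -
        have a: "Suc q + t < length w - 1" using t q unfolding q'_def by simp
        have b: "Suc q \<le> length (rot k w)" using q k by (simp add: length_rot)
        show ?thesis using nth_rot[OF k a] nth_drop[OF b, of t] by simp
      qed
      finally show "take q' (rot k' w) ! t = drop (Suc q) (rot k w) ! t" .
    qed
    have t2: "drop (Suc q') (rot k' w) = take q (rot k w)"
    proof (rule nth_equalityI)
      show "length (drop (Suc q') (rot k' w)) = length (take q (rot k w))"
        using k k' q unfolding q'_def by (simp add: length_rot)
      fix t assume "t < length (drop (Suc q') (rot k' w))"
      then have t: "t < q" using k' q unfolding q'_def by (simp add: length_rot)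
      have "drop (Suc q') (rot k' w) ! t = w ! ((Suc k' + (Suc q' + t)) mod ?L)"
        using t nth_rot[OF k', of "Suc q' + t"] q k' unfolding q'_def by (simp add: length_rot)
      also have "\<dots> = w ! ((Suc (Suc k + q) + (Suc q' + t)) mod ?L)"
        unfolding k'_def by (simp only: modh)
      also have "\<dots> = w ! ((Suc k + t) mod ?L)"
      proof -
        have "Suc (Suc k + q) + (Suc q' + t) = (Suc k + t) + ?L" unfolding q'_def using q by simp
        then show ?thesis by (metis mod_add_self2)
      qed
      also have "\<dots> = rot k w ! t"
        using t q nth_rot[OF k, of t] by simp
      finally show "drop (Suc q') (rot k' w) ! t = take q (rot k w) ! t" using t by simp
    qed
    have "trm (\<sigma> p) = - trm p"
    proof -
      have "trm (\<sigma> p) = (if rel (rot k w ! q) (w ! k) then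
          sg (rot k w ! q) * Sym n (drop (Suc q) (rot k w)) (take q (rot k w)) else 0)"
        unfolding trm_def sp using e1 e2 t1 t2 by simp
      also have "\<dots> = - trm p"
        unfolding trm_def p by (auto simp: rel_def sg_def Sym_comm)
      finally show ?thesis .
    qed
    moreover have "\<sigma> (\<sigma> p) = p"
    proof -
      have q'': "?L - 2 - q' = q" unfolding q'_def using q by simp
      have "\<sigma> (\<sigma> p) = \<sigma> (k', q')" using sp by simp
      also have "\<dots> = ((Suc k' + q') mod ?L, ?L - 2 - q')" by (simp add: \<sigma>_def)
      also have "\<dots> = (k, q)" by (simp only: kk q'')
      finally show ?thesis using p by simp
    qed
    moreover have "\<sigma> p \<in> I" unfolding sp I_def using k' q' by simp
    ultimately show "\<sigma> p \<in> I \<and> \<sigma> (\<sigma> p) = p \<and> trm (\<sigma> p) = - trm p" by blast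
  qed
  have "sum trm I = sum (\<lambda>p. trm (\<sigma> p)) I"
    by (rule sum.reindex_bij_witness[where i=\<sigma> and j=\<sigma>]) (auto dest: key)
  also have "\<dots> = - sum trm I"
    using key by (simp add: sum_negf[symmetric])
  finally have "sum trm I = 0" by simp
  then show ?thesis using sum_eq by simp
qed

definition SS :: "nat \<Rightarrow> nat list \<Rightarrow> complex" where
  "SS n w = (\<Sum>k<length w. sg (w!k) * (AA n (flp (w!k)) (rot k w) + BB n (flp (w!k)) (rot k w)))"

lemma flp_in: "flp a \<in> {1,2}" by (simp add: flp_def)

lemma SS_rec: "SS n w = (\<Sum>i<n. CC i * SS (n - Suc i) w)"
proof -
  have "SS n w = (\<Sum>k<length w. sg (w!k) * ((\<Sum>i<n. CC i * (AA (n - Suc i) (flp (w!k)) (rot k w) + BB (n - Suc i) (flp (w!k)) (rot k w)))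
      + (al n (flp (w!k)) (rot k w) + be n (flp (w!k)) (rot k w))))"
    unfolding SS_def
  proof (rule sum.cong)
    fix k
    show "sg (w!k) * (AA n (flp (w!k)) (rot k w) + BB n (flp (w!k)) (rot k w)) =
      sg (w!k) * ((\<Sum>i<n. CC i * (AA (n - Suc i) (flp (w!k)) (rot k w) + BB (n - Suc i) (flp (w!k)) (rot k w)))
      + (al n (flp (w!k)) (rot k w) + be n (flp (w!k)) (rot k w)))"
      unfolding RA[OF flp_in, of n] RB[OF flp_in, of n] by (simp add: sum.distrib distrib_left)
  qed simp
  also have "\<dots> = (\<Sum>k<length w. \<Sum>i<n. CC i * (sg (w!k) * (AA (n - Suc i) (flp (w!k)) (rot k w) + BB (n - Suc i) (flp (w!k)) (rot k w))))
      + (\<Sum>k<length w. sg (w!k) * (al n (flp (w!k)) (rot k w) + be n (flp (w!k)) (rot k w)))"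
    by (simp add: distrib_left sum.distrib sum_distrib_left mult.left_commute)
  also have "\<dots> = (\<Sum>i<n. CC i * SS (n - Suc i) w)"
    unfolding cancel SS_def by (simp add: sum.swap[of _ "{..<length w}"] sum_distrib_left)
  finally show ?thesis .
qed

lemma SS_zero: "SS n w = 0"
proof (induction n rule: less_induct)
  case (less n)
  show ?case unfolding SS_rec[of n] using less by (intro sum.neutral) auto
qed



definition gsum :: "nat \<Rightarrow> nat list \<Rightarrow> (nat list \<Rightarrow> complex) \<Rightarrow> complex" where
  "gsum j w X = (\<Sum>k<length w. if w!k = j then X (rot k w) else 0)"

lemma gsum_blk:
  assumes "length cs = Suc n"
  shows "gsum a (blk cs) \<phi> = (\<Sum>i<Suc n. if cs!i = a then
      \<phi> (a # blk (drop (Suc i) cs @ take i cs)) + \<phi> (blk (drop (Suc i) cs @ take i cs) @ [a]) else 0)"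
  unfolding gsum_def length_blk assms sum_even_odd
proof (rule sum.cong)
  fix i assume "i \<in> {..<Suc n}"
  then have i: "i < length cs" using assms by simp
  have r1: "rot (2*i) (blk cs) = cs!i # blk (drop (Suc i) cs @ take i cs)"
    unfolding rot_def using i by (simp add: drop_blk_odd take_blk)
  have r2: "rot (Suc (2*i)) (blk cs) = blk (drop (Suc i) cs @ take i cs) @ [cs!i]"
    unfolding rot_def using i by (simp add: drop_blk_odd2 take_blk_odd)
  show "(if blk cs ! (2 * i) = a then \<phi> (rot (2 * i) (blk cs)) else 0) +
        (if blk cs ! Suc (2 * i) = a then \<phi> (rot (Suc (2 * i)) (blk cs)) else 0) =
        (if cs ! i = a then \<phi> (a # blk (drop (Suc i) cs @ take i cs)) + \<phi> (blk (drop (Suc i) cs @ take i cs) @ [a]) else 0)"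
    using i r1 r2 by (simp add: blk_nth)
qed simp

lemma P1:
  assumes a: "a \<in> {1,2}"
  shows "(\<Sum>cs\<in>W (Suc n). gsum a (blk cs) \<phi>) = of_nat (Suc n) * (\<Sum>ds\<in>W n. \<phi> (a # blk ds) + \<phi> (blk ds @ [a]))"
proof -
  define h where "h ds = \<phi> (a # blk ds) + \<phi> (blk ds @ [a])" for ds
  have "(\<Sum>cs\<in>W (Suc n). gsum a (blk cs) \<phi>) = (\<Sum>cs\<in>W (Suc n). \<Sum>i<Suc n. if cs!i = a then h (drop (Suc i) cs @ take i cs) else 0)"
    by (rule sum.cong) (auto simp: W_def gsum_blk h_def cong: if_cong)
  also have "\<dots> = (\<Sum>i<Suc n. \<Sum>cs\<in>W (Suc n). if cs!i = a then h (drop (Suc i) cs @ take i cs) else 0)"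
    by (rule sum.swap)
  also have "\<dots> = (\<Sum>i<Suc n. \<Sum>ds\<in>W n. h ds)"
    by (rule sum.cong) (auto simp: PR[OF a])
  finally show ?thesis by (simp add: h_def)
qed

definition lin :: "spoly \<Rightarrow> (nat list \<Rightarrow> complex) \<Rightarrow> complex" where
  "lin p X = (\<Sum>(c, w)\<leftarrow>p. c * X w)"

lemma lin_Nil[simp]: "lin [] X = 0" by (simp add: lin_def)
lemma lin_Cons[simp]: "lin ((c,w) # p) X = c * X w + lin p X" by (simp add: lin_def)
lemma lin_append[simp]: "lin (p @ q) X = lin p X + lin q X" by (simp add: lin_def)

lemma tauP_lin: "tauP p = lin p tau_word" by (simp add: tauP_def lin_def)

lemma lin_map_mul: "lin (map (\<lambda>(d, v). (c * d, f v)) q) X = c * lin q (\<lambda>v. X (f v))"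
  by (induction q) (auto simp: algebra_simps)

lemma lin_mulP: "lin (mulP p q) X = lin p (\<lambda>u. lin q (\<lambda>v. X (u @ v)))"
proof (induction p)
  case Nil then show ?case by (simp add: mulP_def)
next
  case (Cons a p)
  obtain c u where a: "a = (c, u)" by fastforce
  have "mulP (a # p) q = map (\<lambda>(d, v). (c * d, u @ v)) q @ mulP p q"
    unfolding mulP_def a by (induction q) auto
  then show ?case using Cons a by (simp add: lin_map_mul)
qed

lemma sum_list_filter_upt: "sum_list (map f (filter P [0..<n])) = (\<Sum>k<n. if P k then f k else 0)"
  by (induction n) auto

lemma concat_if_single: "concat (map (\<lambda>k. if P k then [g k] else []) xs) = map g (filter P xs)"
  by (induction xs) auto

lemma lin_cgrad_word: "lin (cgrad_word j w) X = gsum j w X"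
proof -
  have "cgrad_word j w = map (\<lambda>k. (1, rot k w)) (filter (\<lambda>k. w!k = j) [0..<length w])"
    unfolding cgrad_word_def rot_def by (simp add: concat_if_single)
  then show ?thesis unfolding gsum_def lin_def
    by (simp add: sum_list_filter_upt comp_def)
qed

lemma lin_cgradP: "lin (cgradP j p) X = lin p (\<lambda>w. gsum j w X)"
proof (induction p)
  case Nil then show ?case by (simp add: cgradP_def)
next
  case (Cons a p)
  obtain c u where a: "a = (c, u)" by fastforce
  have "cgradP j (a # p) = map (\<lambda>(d, v). (c * d, id v)) (cgrad_word j u) @ cgradP j p"
    unfolding cgradP_def a by simp
  then show ?case using Cons a by (simp only: lin_append lin_map_mul lin_cgrad_word id_apply lin_Cons)
qed

lemma lin_negP: "lin (negP p) X = - lin p X"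
  by (induction p) (auto simp: negP_def)

lemma lin_minus: "lin p (\<lambda>w. X w - Y w) = lin p X - lin p Y"
  by (induction p) (auto simp: algebra_simps)

lemma lin_zero: "(\<And>w. X w = 0) \<Longrightarrow> lin p X = 0"
  by (induction p) auto

lemma gsum_lin_step: "gsum j f (\<lambda>v. c * X v + Z v) = c * gsum j f X + gsum j f Z"
  unfolding gsum_def by (auto simp: sum.distrib[symmetric] sum_distrib_left intro!: sum.cong)

lemma gsum_zero: "gsum j f (\<lambda>v. 0) = 0"
  unfolding gsum_def by simp

lemma gsum_lin: "gsum j f (\<lambda>u. lin r (Y u)) = lin r (\<lambda>w. gsum j f (\<lambda>u. Y u w))"
proof (induction r)
  case Nil then show ?case by (simp add: gsum_zero)
next
  case (Cons a r)
  obtain c u where a: "a = (c, u)" by fastforce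
  show ?case using Cons unfolding a by (simp add: gsum_lin_step)
qed

lemma sum_lin: "(\<Sum>x\<in>A. lin r (Y x)) = lin r (\<lambda>w. \<Sum>x\<in>A. Y x w)"
  by (induction r) (auto simp: sum.distrib sum_distrib_left)

lemma gsum_sum: "finite A \<Longrightarrow> (\<Sum>x\<in>A. gsum j w (Y x)) = gsum j w (\<lambda>v. \<Sum>x\<in>A. Y x v)"
  unfolding gsum_def by (subst sum.swap) (auto intro!: sum.cong)

lemma gsum_add: "gsum j w (\<lambda>v. X v + Y v) = gsum j w X + gsum j w Y"
  unfolding gsum_def by (auto simp: sum.distrib[symmetric] intro!: sum.cong)

fun Ls :: "nat \<Rightarrow> nat list list" where
  "Ls 0 = [[]]"
| "Ls (Suc n) = map (Cons 1) (Ls n) @ map (Cons 2) (Ls n)"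

lemma set_Ls: "set (Ls n) = W n"
proof (induction n)
  case 0 then show ?case by (auto simp: W_def)
next
  case (Suc n)
  show ?case
  proof
    show "set (Ls (Suc n)) \<subseteq> W (Suc n)" using Suc by (auto simp: W_def)
    show "W (Suc n) \<subseteq> set (Ls (Suc n))"
    proof
      fix cs assume "cs \<in> W (Suc n)"
      then obtain c t where cs: "cs = c # t" "length t = n" "c \<in> {1,2}" "set t \<subseteq> {1,2}"
        by (cases cs) (auto simp: W_def)
      then show "cs \<in> set (Ls (Suc n))" using Suc by (auto simp: W_def)
    qed
  qed
qed

lemma distinct_Ls: "distinct (Ls n)"
  by (induction n) (auto simp: distinct_map)

definition Qp :: spoly where
  "Qp = addP (mulP (genP 1) (genP 1)) (mulP (genP 2) (genP 2))"

lemma powP_Qp: "powP Qp n = map (\<lambda>cs. (1, blk cs)) (Ls n)"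
proof (induction n)
  case 0 then show ?case by (simp add: oneP_def)
next
  case (Suc n)
  then show ?case
    by (simp add: Qp_def addP_def mulP_def genP_def comp_def case_prod_beta)
qed

lemma lin_powP: "lin (powP Qp n) X = (\<Sum>cs\<in>W n. X (blk cs))"
proof -
  have "lin (powP Qp n) X = sum_list (map (\<lambda>cs. X (blk cs)) (Ls n))"
    unfolding powP_Qp lin_def by (simp add: comp_def)
  also have "\<dots> = (\<Sum>cs\<in>W n. X (blk cs))"
    using sum_list_distinct_conv_sum_set[OF distinct_Ls, of "\<lambda>cs. X (blk cs)" n] set_Ls by simp
  finally show ?thesis .
qed



definition GG :: "nat \<Rightarrow> nat \<Rightarrow> nat \<Rightarrow> nat list \<Rightarrow> complex" where
  "GG m a b w = (\<Sum>cs\<in>W m. gsum a (blk cs) (\<lambda>u. gsum b w (\<lambda>v. tau_word (u @ v))))"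

lemma GG_eq: "a \<in> {1,2} \<Longrightarrow> GG (Suc n) a b w = of_nat (Suc n) * gsum b w (\<lambda>v. AA n a v + BB n a v)"
proof -
  assume a: "a \<in> {1,2}"
  have "GG (Suc n) a b w = of_nat (Suc n) * (\<Sum>ds\<in>W n. gsum b w (\<lambda>v. tau_word ((a # blk ds) @ v))
      + gsum b w (\<lambda>v. tau_word ((blk ds @ [a]) @ v)))"
    unfolding GG_def by (rule P1[OF a])
  also have "(\<Sum>ds\<in>W n. gsum b w (\<lambda>v. tau_word ((a # blk ds) @ v)) + gsum b w (\<lambda>v. tau_word ((blk ds @ [a]) @ v)))
     = (\<Sum>ds\<in>W n. gsum b w (\<lambda>v. tau_word (a # blk ds @ v) + tau_word (blk ds @ a # v)))"
    by (simp add: gsum_add)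
  also have "\<dots> = gsum b w (\<lambda>v. \<Sum>ds\<in>W n. tau_word (a # blk ds @ v) + tau_word (blk ds @ a # v))"
    by (rule gsum_sum) simp
  also have "\<dots> = gsum b w (\<lambda>v. AA n a v + BB n a v)"
    by (simp add: AA_def BB_def sum.distrib)
  finally show ?thesis .
qed

lemma GG_sym: "GG (Suc n) 2 1 w = GG (Suc n) 1 2 w"
proof -
  have "gsum 1 w (\<lambda>v. AA n 2 v + BB n 2 v) - gsum 2 w (\<lambda>v. AA n 1 v + BB n 1 v) = SS n w"
    unfolding gsum_def SS_def sum_subtractf[symmetric]
    by (rule sum.cong) (auto simp: sg_def flp_def)
  then have "gsum 1 w (\<lambda>v. AA n 2 v + BB n 2 v) = gsum 2 w (\<lambda>v. AA n 1 v + BB n 1 v)"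
    using SS_zero by simp
  then show ?thesis by (simp add: GG_eq)
qed

lemma lin_main: "lin (cgradP a (powP Qp m)) (\<lambda>u. lin (cgradP b r) (\<lambda>v. tau_word (u @ v)))
   = lin r (GG m a b)"
  unfolding lin_cgradP gsum_lin lin_powP sum_lin GG_def by simp

lemma set_cgradP: "(c, w) \<in> set (cgradP j p) \<Longrightarrow> \<exists>c' w'. (c', w') \<in> set p \<and> set w \<subseteq> set w'"
  unfolding cgradP_def cgrad_word_def
  by (auto; metis set_drop_subset set_take_subset)

lemma set_powP: "(c, w) \<in> set (powP Qp m) \<Longrightarrow> set w \<subseteq> {1,2}"
  unfolding powP_Qp using set_Ls[of m] by (auto simp: W_def)

lemma inAlg_cg: "inAlg 2 (cgradP j (powP Qp m))"
  unfolding inAlg_def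
proof (clarify)
  fix c w x assume "(c, w) \<in> set (cgradP j (powP Qp m))" "x \<in> set w"
  then obtain c' w' where "(c', w') \<in> set (powP Qp m)" "set w \<subseteq> set w'" using set_cgradP by blast
  then show "x \<in> {1..2}" using set_powP \<open>x \<in> set w\<close> by fastforce
qed

lemma inAlg_neg: "inAlg n p \<Longrightarrow> inAlg n (negP p)"
  unfolding inAlg_def negP_def by auto

theorem proposition2p5:
  fixes m :: nat
  assumes "m \<ge> 1"
  shows "inVect 2 (\<lambda>j. if j = 1
            then cgradP 2 (powP (addP (mulP (genP 1) (genP 1)) (mulP (genP 2) (genP 2))) m)
            else negP (cgradP 1 (powP (addP (mulP (genP 1) (genP 1)) (mulP (genP 2) (genP 2))) m)))"
proof -
  obtain n where m: "m = Suc n" using assms by (cases m) auto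
  have I: "{1..2::nat} = {1,2}" by auto
  show ?thesis
    unfolding inVect_def Qp_def[symmetric]
  proof (intro conjI allI impI ballI)
    fix j :: nat assume "j \<in> {1..2}"
    then show "inAlg 2 (if j = 1 then cgradP 2 (powP Qp m) else negP (cgradP 1 (powP Qp m)))"
      using inAlg_cg inAlg_neg by auto
  next
    fix r assume "inAlg 2 r"
    have "(\<Sum>j = 1..2. tauP (mulP (if j = 1 then cgradP 2 (powP Qp m) else negP (cgradP 1 (powP Qp m))) (cgradP j r)))
      = tauP (mulP (cgradP 2 (powP Qp m)) (cgradP 1 r)) + tauP (mulP (negP (cgradP 1 (powP Qp m))) (cgradP 2 r))"
      unfolding I by simp
    also have "\<dots> = lin r (GG m 2 1) - lin r (GG m 1 2)"
      unfolding tauP_lin lin_mulP lin_negP lin_main by simp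
    also have "\<dots> = 0"
    proof -
      have "GG (Suc n) 2 1 = GG (Suc n) 1 2" using GG_sym by (intro ext)
      then show ?thesis unfolding m by simp
    qed
    finally show "(\<Sum>j = 1..2. tauP (mulP (if j = 1 then cgradP 2 (powP Qp m) else negP (cgradP 1 (powP Qp m))) (cgradP j r))) = 0" .
  qed
qed

end
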